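(* For $n\ge1$, let $X_n$ be the set of planar rooted trees with $n$ leaves having no vertices with exactly one or exactly two inputs, in which every vertex with $k$ inputs is labelled by an element of $\{1,\dots,k-2\}$. Then $\#X_n=F_{n-1}$, where the Fine numbers $F_k$ are defined by $\sum_{n\ge1}F_{n-1}x^n=\frac{1+2x-\sqrt{1-4x}}{2(2+x)}$.
   Context: For $n=1$, $X_1$ consists of the trivial tree (one leaf, no vertex). *)

theory Defs
  imports Complex_Main
begin

text \<open>Planar rooted trees: a leaf, or a vertex carrying a label and an ordered list of input subtrees.\<close>
datatype ptree = Leaf | Node nat "ptree list"

fun leaves :: "ptree \<Rightarrow> nat" where
  "leaves Leaf = 1"
| "leaves (Node l ts) = sum_list (map leaves ts)"

fun admissible :: "ptree \<Rightarrow> bool" where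
  "admissible Leaf = True"
| "admissible (Node l ts) =
     (length ts \<noteq> 1 \<and> length ts \<noteq> 2 \<and> l \<in> {1..int (length ts) - 2} \<and> (\<forall>t\<in>set ts. admissible t))"

definition X :: "nat \<Rightarrow> ptree set" where
  "X n = {t. admissible t \<and> leaves t = n}"

definition fine_gf :: "real \<Rightarrow> real" where
  "fine_gf x = (1 + 2 * x - sqrt (1 - 4 * x)) / (2 * (2 + x))"

end

theory Submission
  imports Defs "HOL-Analysis.FPS_Convergence" "HOL-Analysis.Generalised_Binomial_Theorem"
begin


lemma adm_Node: "admissible (Node l ts) \<longleftrightarrow>
   (3 \<le> length ts \<and> 1 \<le> l \<and> l + 2 \<le> length ts \<and> (\<forall>t\<in>set ts. admissible t))"
  by auto

lemma leaves_ge1: "admissible t \<Longrightarrow> 1 \<le> leaves t"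
proof (induction t)
  case Leaf then show ?case by simp
next
  case (Node l ts)
  then have "ts \<noteq> []" by (auto simp: adm_Node)
  then obtain t where t: "t \<in> set ts" by (cases ts) auto
  with Node have "1 \<le> leaves t" by (auto simp: adm_Node)
  also have "leaves t \<le> sum_list (map leaves ts)"
    using t by (simp add: member_le_sum_list)
  finally show ?case by simp
qed

lemma len_le_sum: "(\<forall>x\<in>set xs. 1 \<le> (f x::nat)) \<Longrightarrow> length xs \<le> sum_list (map f xs)"
  by (induction xs) auto

lemma mem_le_sum: "(\<forall>x\<in>set xs. 1 \<le> (f x::nat)) \<Longrightarrow> x \<in> set xs \<Longrightarrow>
   f x + (length xs - 1) \<le> sum_list (map f xs)"
proof (induction xs)
  case Nil then show ?case by simp
next
  case (Cons a xs)
  show ?case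
  proof (cases "x = a")
    case True
    then show ?thesis using len_le_sum[of xs f] Cons.prems by auto
  next
    case False
    then have "x \<in> set xs" using Cons.prems by auto
    then have "xs \<noteq> []" by auto
    then have "1 \<le> length xs" by (cases xs) auto
    moreover have "f x + (length xs - 1) \<le> sum_list (map f xs)" using Cons \<open>x \<in> set xs\<close> by auto
    moreover have "1 \<le> f a" using Cons.prems by auto
    ultimately show ?thesis by simp
  qed
qed

lemma X0: "X 0 = {}"
  using leaves_ge1 by (force simp: X_def)

lemma finite_X: "finite (X n)"
proof (induction n rule: less_induct)
  case (less n)
  let ?U = "\<Union>m<n. X m"
  have fU: "finite ?U" using less by auto
  have "X n \<subseteq> {Leaf} \<union> (\<lambda>(l,ts). Node l ts) ` ({..n} \<times> {ts. set ts \<subseteq> ?U \<and> length ts \<le> n})"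
  proof
    fix t assume t: "t \<in> X n"
    show "t \<in> {Leaf} \<union> (\<lambda>(l,ts). Node l ts) ` ({..n} \<times> {ts. set ts \<subseteq> ?U \<and> length ts \<le> n})"
    proof (cases t)
      case Leaf then show ?thesis by simp
    next
      case (Node l ts)
      have adm: "3 \<le> length ts" "1 \<le> l" "l + 2 \<le> length ts" "\<forall>t\<in>set ts. admissible t"
        and lv: "sum_list (map leaves ts) = n"
        using t Node by (auto simp: X_def adm_Node)
      have all1: "\<forall>x\<in>set ts. 1 \<le> leaves x" using adm(4) leaves_ge1 by auto
      have len: "length ts \<le> n" using len_le_sum[OF all1] lv by simp
      have "set ts \<subseteq> ?U"
      proof
        fix s assume s: "s \<in> set ts"
        have "leaves s + (length ts - 1) \<le> n" using mem_le_sum[OF all1 s] lv by simp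
        then have "leaves s < n" using adm(1) by simp
        then show "s \<in> ?U" using s adm(4) by (auto simp: X_def)
      qed
      then show ?thesis using Node len adm by force
    qed
  qed
  moreover have "finite ({Leaf} \<union> (\<lambda>(l,ts). Node l ts) ` ({..n} \<times> {ts. set ts \<subseteq> ?U \<and> length ts \<le> n}))"
    using fU by (intro finite_UnI finite_imageI finite_cartesian_product finite_lists_length_le) auto
  ultimately show ?case by (rule finite_subset)
qed

definition LL :: "nat \<Rightarrow> nat \<Rightarrow> ptree list set" where
  "LL k n = {ts. length ts = k \<and> (\<forall>t\<in>set ts. admissible t) \<and> sum_list (map leaves ts) = n}"

lemma finite_LL: "finite (LL k n)"
proof -
  have "LL k n \<subseteq> {ts. set ts \<subseteq> (\<Union>m\<le>n. X m) \<and> length ts = k}"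
  proof
    fix ts assume "ts \<in> LL k n"
    then have ts: "length ts = k" "\<forall>t\<in>set ts. admissible t" "sum_list (map leaves ts) = n"
      by (auto simp: LL_def)
    have "set ts \<subseteq> (\<Union>m\<le>n. X m)"
    proof
      fix s assume s: "s \<in> set ts"
      then have "leaves s \<le> n" using ts(3) member_le_sum_list[of "leaves s" "map leaves ts"] by auto
      then show "s \<in> (\<Union>m\<le>n. X m)" using s ts(2) by (auto simp: X_def)
    qed
    then show "ts \<in> {ts. set ts \<subseteq> (\<Union>m\<le>n. X m) \<and> length ts = k}" using ts by auto
  qed
  moreover have "finite {ts. set ts \<subseteq> (\<Union>m\<le>n. X m) \<and> length ts = k}"
    using finite_X by (intro finite_lists_length_eq) auto
  ultimately show ?thesis by (rule finite_subset)
qed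

lemma LL_0: "LL 0 n = (if n = 0 then {[]} else {})"
  by (auto simp: LL_def)

lemma LL_Suc: "LL (Suc k) n = (\<Union>i\<in>{..n}. (\<lambda>(t,ts). t#ts) ` (X i \<times> LL k (n-i)))"
proof (rule set_eqI)
  fix xs
  show "xs \<in> LL (Suc k) n \<longleftrightarrow> xs \<in> (\<Union>i\<in>{..n}. (\<lambda>(t,ts). t#ts) ` (X i \<times> LL k (n-i)))"
  proof
    assume "xs \<in> LL (Suc k) n"
    then obtain t ts where xs: "xs = t # ts" and h: "length ts = k" "admissible t"
      "\<forall>t\<in>set ts. admissible t" "leaves t + sum_list (map leaves ts) = n"
      by (cases xs) (auto simp: LL_def)
    then show "xs \<in> (\<Union>i\<in>{..n}. (\<lambda>(t,ts). t#ts) ` (X i \<times> LL k (n-i)))"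
      by (auto simp: X_def LL_def intro!: bexI[of _ "leaves t"] image_eqI[of _ _ "(t,ts)"])
  next
    assume "xs \<in> (\<Union>i\<in>{..n}. (\<lambda>(t,ts). t#ts) ` (X i \<times> LL k (n-i)))"
    then show "xs \<in> LL (Suc k) n" by (auto simp: X_def LL_def)
  qed
qed

lemma card_LL_Suc: "card (LL (Suc k) n) = (\<Sum>i\<le>n. card (X i) * card (LL k (n-i)))"
proof -
  have "card (LL (Suc k) n) = (\<Sum>i\<le>n. card ((\<lambda>(t,ts). t#ts) ` (X i \<times> LL k (n-i))))"
    unfolding LL_Suc
  proof (rule card_UN_disjoint)
    show "\<forall>i\<in>{..n}. \<forall>j\<in>{..n}. i \<noteq> j \<longrightarrow>
      (\<lambda>(t,ts). t#ts) ` (X i \<times> LL k (n-i)) \<inter> (\<lambda>(t,ts). t#ts) ` (X j \<times> LL k (n-j)) = {}"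
      by (auto simp: X_def)
  qed (auto intro!: finite_imageI finite_cartesian_product finite_X finite_LL)
  also have "\<dots> = (\<Sum>i\<le>n. card (X i) * card (LL k (n-i)))"
  proof (rule sum.cong[OF refl])
    fix i
    have "inj_on (\<lambda>(t,ts). t#ts) (X i \<times> LL k (n-i))" by (auto simp: inj_on_def)
    then show "card ((\<lambda>(t,ts). t#ts) ` (X i \<times> LL k (n-i))) = card (X i) * card (LL k (n-i))"
      by (simp add: card_image card_cartesian_product)
  qed
  finally show ?thesis .
qed

definition Afps :: "real fps" where "Afps = Abs_fps (\<lambda>n. real (card (X n)))"

lemma Afps_0: "fps_nth Afps 0 = 0" by (simp add: Afps_def X0)

lemma LL_fps: "Abs_fps (\<lambda>n. real (card (LL k n))) = Afps ^ k"
proof (induction k)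
  case 0 then show ?case by (simp add: LL_0 fps_eq_iff)
next
  case (Suc k)
  show ?case
  proof (rule fps_ext)
    fix n
    have "fps_nth (Afps ^ Suc k) n = fps_nth (Afps * Afps ^ k) n" by simp
    also have "\<dots> = (\<Sum>i=0..n. fps_nth Afps i * fps_nth (Afps ^ k) (n - i))" by (rule fps_mult_nth)
    also have "\<dots> = (\<Sum>i\<le>n. real (card (X i)) * real (card (LL k (n-i))))"
    proof -
      have "fps_nth (Afps^k) m = real (card (LL k m))" for m by (simp flip: Suc.IH)
      then show ?thesis by (simp add: atLeast0AtMost Afps_def)
    qed
    also have "\<dots> = real (card (LL (Suc k) n))" by (simp add: card_LL_Suc)
    finally show "fps_nth (Abs_fps (\<lambda>n. real (card (LL (Suc k) n)))) n = fps_nth (Afps ^ Suc k) n" by simp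
  qed
qed

lemma X_decomp: "X n = {t. t = Leaf \<and> n = 1} \<union>
   (\<Union>k\<in>{3..n}. (\<lambda>(l,ts). Node l ts) ` ({1..k-2} \<times> LL k n))"
proof (rule set_eqI)
  fix t
  show "t \<in> X n \<longleftrightarrow> t \<in> {t. t = Leaf \<and> n = 1} \<union>
   (\<Union>k\<in>{3..n}. (\<lambda>(l,ts). Node l ts) ` ({1..k-2} \<times> LL k n))"
  proof (cases t)
    case Leaf then show ?thesis by (auto simp: X_def LL_def)
  next
    case (Node l ts)
    have "t \<in> X n \<longleftrightarrow> length ts \<in> {3..n} \<and> l \<in> {1..length ts - 2} \<and> ts \<in> LL (length ts) n"
    proof
      assume t: "t \<in> X n"
      have adm: "3 \<le> length ts" "1 \<le> l" "l + 2 \<le> length ts" "\<forall>t\<in>set ts. admissible t"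
        and lv: "sum_list (map leaves ts) = n"
        using t Node by (auto simp: X_def adm_Node)
      have all1: "\<forall>x\<in>set ts. 1 \<le> leaves x" using adm(4) leaves_ge1 by auto
      have len: "length ts \<le> n" using len_le_sum[OF all1] lv by simp
      show "length ts \<in> {3..n} \<and> l \<in> {1..length ts - 2} \<and> ts \<in> LL (length ts) n"
        using adm lv len by (auto simp: LL_def)
    next
      assume "length ts \<in> {3..n} \<and> l \<in> {1..length ts - 2} \<and> ts \<in> LL (length ts) n"
      then show "t \<in> X n" using Node by (auto simp: X_def LL_def adm_Node)
    qed
    also have "\<dots> \<longleftrightarrow> t \<in> {t. t = Leaf \<and> n = 1} \<union>
        (\<Union>k\<in>{3..n}. (\<lambda>(l,ts). Node l ts) ` ({1..k-2} \<times> LL k n))"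
      using Node by (auto simp: LL_def intro!: bexI[of _ "length ts"] image_eqI[of _ _ "(l,ts)"])
    finally show ?thesis .
  qed
qed

lemma card_X: "card (X n) = (if n = 1 then 1 else 0) + (\<Sum>k\<in>{3..n}. (k-2) * card (LL k n))"
proof -
  have A: "card {t. t = Leaf \<and> n = 1} = (if n = 1 then 1 else 0)" by auto
  have B: "card (\<Union>k\<in>{3..n}. (\<lambda>(l,ts). Node l ts) ` ({1..k-2} \<times> LL k n)) =
      (\<Sum>k\<in>{3..n}. card ((\<lambda>(l,ts). Node l ts) ` ({1..k-2} \<times> LL k n)))"
    apply (rule card_UN_disjoint)
      apply simp
     apply (auto intro!: finite_imageI finite_LL)[1]
    apply (auto simp: LL_def)
    done
  have C: "card ((\<lambda>(l,ts). Node l ts) ` ({1..k-2} \<times> LL k n)) = (k-2) * card (LL k n)" for k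
  proof -
    have "inj_on (\<lambda>(l,ts). Node l ts) ({1..k-2} \<times> LL k n)" by (auto simp: inj_on_def)
    then show ?thesis by (simp add: card_image card_cartesian_product)
  qed
  have "card (X n) = card {t. t = Leaf \<and> n = 1} +
      card (\<Union>k\<in>{3..n}. (\<lambda>(l,ts). Node l ts) ` ({1..k-2} \<times> LL k n))"
    by (subst X_decomp, rule card_Un_disjoint) (auto intro!: finite_imageI finite_LL)
  then show ?thesis using A B C by simp
qed



lemma pow_nth0: "fps_nth (A::'a::comm_ring_1 fps) 0 = 0 \<Longrightarrow> n < k \<Longrightarrow> fps_nth (A^k) n = 0"
proof (induction k arbitrary: n)
  case 0 then show ?case by simp
next
  case (Suc k)
  have "fps_nth (A^Suc k) n = (\<Sum>i=0..n. fps_nth A i * fps_nth (A^k) (n - i))"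
    by (simp add: fps_mult_nth)
  also have "\<dots> = 0"
  proof (rule sum.neutral, intro ballI)
    fix i assume i: "i \<in> {0..n}"
    show "fps_nth A i * fps_nth (A^k) (n - i) = 0"
    proof (cases "i = 0")
      case True then show ?thesis using Suc.prems by simp
    next
      case False then show ?thesis using Suc.IH[of "n-i"] Suc.prems i by simp
    qed
  qed
  finally show ?case .
qed

lemma mult_nth_zero: "(\<And>m. m \<le> n \<Longrightarrow> fps_nth g m = 0) \<Longrightarrow> fps_nth ((f::'a::comm_ring_1 fps) * g) n = 0"
  unfolding fps_mult_nth by (intro sum.neutral) auto

lemma sum_ident:
  fixes A :: "'a::comm_ring_1"
  assumes "2 \<le> N"
  shows "(1 - A)^2 * (\<Sum>k\<in>{3..N}. of_nat (k-2) * A^k) =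
     A^3 - (of_nat N - 1) * A^(N+1) + (of_nat N - 2) * A^(N+2)"
  using assms
proof (induction N rule: dec_induct)
  case base then show ?case by (simp add: algebra_simps power3_eq_cube)
next
  case (step N)
  have S: "(\<Sum>k\<in>{3..Suc N}. f k) = f (Suc N) + (\<Sum>k\<in>{3..N}. f k)" for f :: "nat \<Rightarrow> 'a"
    using step(1) by (simp add: sum.cl_ivl_Suc)
  have C: "(of_nat (Suc N - 2) :: 'a) = of_nat N - 1"
    using step(1) by (simp add: of_nat_diff)
  have "(1 - A)^2 * (\<Sum>k\<in>{3..Suc N}. of_nat (k-2) * A^k) =
     (1 - A)^2 * ((of_nat N - 1) * A^(Suc N)) + (1 - A)^2 * (\<Sum>k\<in>{3..N}. of_nat (k-2) * A^k)"
    by (simp only: S C distrib_left)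
  also have "\<dots> = (1 - A)^2 * ((of_nat N - 1) * A^(Suc N)) +
     (A^3 - (of_nat N - 1) * A^(N+1) + (of_nat N - 2) * A^(N+2))" using step(3) by simp
  also have "\<dots> = A^3 - (of_nat (Suc N) - 1) * A^(Suc N+1) + (of_nat (Suc N) - 2) * A^(Suc N+2)"
    by (simp add: algebra_simps power2_eq_square of_nat_Suc)
  finally show ?case .
qed

lemma A_nth: "fps_nth Afps n = (if n = 1 then 1 else 0) +
   (\<Sum>k\<in>{3..n}. of_nat (k-2) * fps_nth (Afps^k) n)"
proof -
  have "fps_nth (Afps^k) n = real (card (LL k n))" for k by (simp flip: LL_fps)
  then show ?thesis by (simp add: Afps_def card_X)
qed

lemma A_eq: "(2 + fps_X) * Afps^2 - (1 + 2 * fps_X) * Afps + fps_X = 0"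
proof -
  let ?A = Afps
  define G where "G = ?A * (1 - ?A)^2 - fps_X * (1 - ?A)^2 - ?A^3"
  have "fps_nth G n = 0" for n
  proof -
    define N where "N = n + 2"
    define P where "P = (\<Sum>k\<in>{3..N}. of_nat (k-2) * ?A^k)"
    define E where "E = ?A - fps_X - P"
    have E0: "fps_nth E m = 0" if "m \<le> N" for m
    proof -
      have "fps_nth P m = (\<Sum>k\<in>{3..N}. fps_nth (of_nat (k-2) * ?A^k) m)"
        by (simp only: P_def fps_sum_nth)
      also have "\<dots> = (\<Sum>k\<in>{3..N}. of_nat (k-2) * fps_nth (?A^k) m)"
        by (simp only: fps_mult_of_nat_nth)
      also have "\<dots> = (\<Sum>k\<in>{3..m}. of_nat (k-2) * fps_nth (?A^k) m)"
      proof (rule sum.mono_neutral_right)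
        show "\<forall>i\<in>{3..N} - {3..m}. of_nat (i - 2) * fps_nth (?A ^ i) m = 0"
          using pow_nth0[OF Afps_0] by auto
      qed (use that in auto)
      finally show ?thesis by (simp add: E_def A_nth fps_X_def)
    qed
    have "(1 - ?A)^2 * E = G + (of_nat N - 1) * ?A^(N+1) - (of_nat N - 2) * ?A^(N+2)"
      using sum_ident[of N ?A] unfolding E_def G_def P_def N_def
      by (simp add: algebra_simps)
    then have "G = (1 - ?A)^2 * E - (of_nat N - 1) * ?A^(N+1) + (of_nat N - 2) * ?A^(N+2)"
      by (simp add: algebra_simps)
    moreover have "fps_nth ((1 - ?A)^2 * E) n = 0"
      by (rule mult_nth_zero) (use E0 N_def in auto)
    moreover have "fps_nth ((of_nat N - 1) * ?A^(N+1)) n = 0"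
      by (rule mult_nth_zero, rule pow_nth0[OF Afps_0]) (simp add: N_def)
    moreover have "fps_nth ((of_nat N - 2) * ?A^(N+2)) n = 0"
      by (rule mult_nth_zero, rule pow_nth0[OF Afps_0]) (simp add: N_def)
    ultimately show ?thesis by simp
  qed
  then have "G = 0" by (simp add: fps_eq_iff)
  then show ?thesis unfolding G_def by (simp add: algebra_simps power2_eq_square power3_eq_cube)
qed



definition Sfps :: "real fps" where
  "Sfps = fps_binomial (1/2) oo (fps_const (-4) * fps_X)"
definition Dfps :: "real fps" where "Dfps = 4 + 2 * fps_X"
definition Nfps :: "real fps" where "Nfps = 1 + 2 * fps_X - Sfps"
definition Bfps :: "real fps" where "Bfps = Nfps * inverse Dfps"

lemma D_poly: "Dfps = fps_of_poly [:4,2:]"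
  by (simp add: Dfps_def fps_of_poly_pCons numeral_fps_const)
lemma N1_poly: "1 + 2 * fps_X = (fps_of_poly [:1,2:] :: real fps)"
  by (simp add: fps_of_poly_pCons numeral_fps_const)

lemma S_nth: "fps_nth Sfps n = (-4)^n * ((1/2) gchoose n)"
  by (simp add: Sfps_def)

lemma S_sq: "Sfps^2 = 1 - 4 * fps_X"
proof -
  have L0: "fps_nth (fps_const (-4::real) * fps_X) 0 = 0" by simp
  have "Sfps^2 = fps_binomial (1/2) ^ 2 oo (fps_const (-4) * fps_X)"
    unfolding Sfps_def by (rule fps_compose_power[OF L0])
  also have "fps_binomial (1/2::real) ^ 2 = 1 + fps_X"
    by (simp add: fps_binomial_power fps_binomial_1)
  also have "(1 + fps_X) oo (fps_const (-4) * fps_X) = 1 + fps_const (-4::real) * fps_X"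
    by (simp add: fps_compose_add_distrib L0)
  finally show ?thesis by (simp add: numeral_fps_const)
qed

lemma D_inv: "Dfps * inverse Dfps = 1"
  by (rule inverse_mult_eq_1') (simp add: Dfps_def)

lemma B_eq: "(2 + fps_X) * Bfps^2 - (1 + 2 * fps_X) * Bfps + fps_X = 0"
proof -
  have BD: "Bfps * Dfps = Nfps" using D_inv by (simp add: Bfps_def mult.assoc mult.commute[of "inverse Dfps"])
  have "Dfps^2 * ((2 + fps_X) * Bfps^2 - (1 + 2 * fps_X) * Bfps + fps_X) =
     (2 + fps_X) * (Bfps * Dfps)^2 - (1 + 2 * fps_X) * (Bfps * Dfps) * Dfps + fps_X * Dfps^2"
    by (simp add: algebra_simps power2_eq_square)
  also have "\<dots> = (2 + fps_X) * Nfps^2 - (1 + 2 * fps_X) * Nfps * Dfps + fps_X * Dfps^2"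
    by (simp add: BD)
  also have "\<dots> = (2 + fps_X) * (Sfps^2 - (1 - 4 * fps_X))"
    by (simp add: Nfps_def Dfps_def algebra_simps power2_eq_square)
  also have "\<dots> = 0" by (simp add: S_sq)
  finally have "Dfps^2 * ((2 + fps_X) * Bfps^2 - (1 + 2 * fps_X) * Bfps + fps_X) = 0" .
  moreover have "Dfps \<noteq> 0"
  proof
    assume "Dfps = 0"
    then have "fps_nth Dfps 0 = 0" by simp
    then show False by (simp add: Dfps_def)
  qed
  ultimately show ?thesis by simp
qed

lemma B_0: "fps_nth Bfps 0 = 0"
  by (simp add: Bfps_def Nfps_def S_nth)

lemma A_B: "Afps = Bfps"
proof -
  let ?W = "(2 + fps_X) * (Afps + Bfps) - (1 + 2 * fps_X)"
  have "(Afps - Bfps) * ?W =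
     ((2 + fps_X) * Afps^2 - (1 + 2 * fps_X) * Afps + fps_X) -
     ((2 + fps_X) * Bfps^2 - (1 + 2 * fps_X) * Bfps + fps_X)"
    by (simp add: algebra_simps power2_eq_square)
  also have "\<dots> = 0" using A_eq B_eq by simp
  finally have "(Afps - Bfps) * ?W = 0" .
  moreover have "?W \<noteq> 0"
  proof
    assume "?W = 0"
    then have "fps_nth ?W 0 = 0" by simp
    then show False using Afps_0 B_0 by simp
  qed
  ultimately show ?thesis by simp
qed



lemma half_not_nat: "(1/2::real) \<notin> \<nat>"
proof
  assume "(1/2::real) \<in> \<nat>"
  then obtain m where m: "(1/2::real) = of_nat m" by (auto elim: Nats_cases)
  then have "real (2*m) = 1" by simp
  then have "2*m = (1::nat)" by linarith
  then show False by presburger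
qed

lemma S_rad: "fps_conv_radius Sfps = ereal (1/4)"
proof -
  have "fps_conv_radius Sfps = conv_radius (\<lambda>n. (-4::real)^n * ((1/2) gchoose n))"
    by (simp add: fps_conv_radius_def S_nth)
  also have "\<dots> = conv_radius (\<lambda>n. (1/2::real) gchoose n) / ereal (norm (-4::real))"
    by (rule conv_radius_mult_power) simp
  also have "\<dots> = ereal (1/4)"
    using half_not_nat by (simp add: conv_radius_gchoose one_ereal_def)
  finally show ?thesis .
qed

lemma S_eval: "\<bar>x\<bar> < 1/4 \<Longrightarrow> eval_fps Sfps x = sqrt (1 - 4 * x)"
proof -
  assume x: "\<bar>x\<bar> < 1/4"
  then have "\<bar>-4*x\<bar> < 1" by simp
  from sqrt_series[OF this] have "(\<lambda>n. ((1/2) gchoose n) * (-4*x)^n) sums sqrt (1 - 4 * x)"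
    by simp
  moreover have "(\<lambda>n. ((1/2) gchoose n) * (-4*x)^n) = (\<lambda>n. fps_nth Sfps n * x^n)"
    by (simp only: S_nth power_mult_distrib mult_ac)
  ultimately show ?thesis by (simp add: eval_fps_def sums_iff)
qed

lemma pos_ereal_below: "0 < (R::ereal) \<Longrightarrow> \<exists>e>0. ereal e < R"
  by (cases R) (auto intro: exI[of _ "real_of_ereal R / 2"] exI[of _ 1])

theorem corollary2p4:
  shows "\<exists>r>0. \<forall>x::real. \<bar>x\<bar> < r \<longrightarrow>
           (\<lambda>n. real (card (X (Suc n))) * x ^ Suc n) sums fine_gf x"
proof -
  have "fps_conv_radius (inverse Dfps) > 0"
    by (rule fps_conv_radius_inverse_pos) (simp add: Dfps_def, simp add: D_poly)
  then obtain e where e: "e > 0" "ereal e < fps_conv_radius (inverse Dfps)"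
    using pos_ereal_below by blast
  define r where "r = min e (1/4)"
  have "r > 0" using e by (simp add: r_def)
  moreover have "(\<lambda>n. real (card (X (Suc n))) * x ^ Suc n) sums fine_gf x" if x: "\<bar>x\<bar> < r" for x
  proof -
    have x4: "\<bar>x\<bar> < 1/4" and xe: "ereal \<bar>x\<bar> < fps_conv_radius (inverse Dfps)"
      using x e by (auto simp: r_def intro: le_less_trans[OF _ e(2)])
    have xS: "ereal (norm x) < fps_conv_radius Sfps" using x4 by (simp add: S_rad)
    have xN: "ereal (norm x) < fps_conv_radius Nfps"
    proof -
      have "fps_conv_radius Nfps \<ge> min (fps_conv_radius (1 + 2 * fps_X :: real fps)) (fps_conv_radius Sfps)"
        unfolding Nfps_def by (rule fps_conv_radius_diff)
      then show ?thesis using xS by (simp add: N1_poly)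
    qed
    have xB: "ereal (norm x) < fps_conv_radius Bfps"
    proof -
      have "fps_conv_radius Bfps \<ge> min (fps_conv_radius Nfps) (fps_conv_radius (inverse Dfps))"
        unfolding Bfps_def by (rule fps_conv_radius_mult)
      moreover have "ereal (norm x) < min (fps_conv_radius Nfps) (fps_conv_radius (inverse Dfps))"
        using xN xe by simp
      ultimately show ?thesis by (rule less_le_trans[rotated])
    qed
    have "eval_fps Dfps x * eval_fps (inverse Dfps) x = eval_fps (Dfps * inverse Dfps) x"
      using xe by (subst eval_fps_mult) (simp_all add: D_poly)
    also have "\<dots> = 1" by (simp add: D_inv)
    moreover have evD: "eval_fps Dfps x = 4 + 2 * x" by (simp add: D_poly)
    ultimately have "(4 + 2 * x) * eval_fps (inverse Dfps) x = 1" by simp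
    moreover have "4 + 2 * x \<noteq> 0" using x4 by auto
    ultimately have invD: "eval_fps (inverse Dfps) x = 1 / (4 + 2 * x)"
      by (simp add: field_simps)
    have "eval_fps Nfps x = (1 + 2 * x) - sqrt (1 - 4 * x)"
      unfolding Nfps_def using xS
      by (subst eval_fps_diff) (simp_all add: N1_poly S_eval[OF x4])
    then have evB: "eval_fps Bfps x = fine_gf x"
      unfolding Bfps_def using xN xe
      by (subst eval_fps_mult) (simp_all add: invD fine_gf_def field_simps)
    have "(\<lambda>n. fps_nth Bfps n * x ^ n) sums eval_fps Bfps x"
      using xB by (intro sums_eval_fps) simp
    then have "(\<lambda>n. real (card (X n)) * x ^ n) sums fine_gf x"
      using evB by (simp add: A_B[symmetric] Afps_def)
    then show ?thesis
      by (subst sums_Suc_iff) (simp add: X0)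
  qed
  ultimately show ?thesis by blast
qed

end
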